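(* Let $G$ be a strongly connected digraph with at least two vertices. Then for every arc $(v,w)$ of $G$ there exists an arc $(a,b)$ of $G$ that is a good arc for $(v,w)$.
   Context: Digraphs may have loops but no multiple arcs; paths are directed, without repeated vertices, and a path from a vertex to itself may have length $0$. For a set or element $X$ of arcs, $G\setminus X$ is the digraph obtained by removing $X$. Given arcs $(a,b)$ and $(v,w)$ of $G$, $(a,b)$ is a good arc for $(v,w)$ if: (i) $b\neq w$; (ii) for every vertex $u\neq w$, $G\setminus(a,b)$ has a path from $u$ to $v$; (iii) for every vertex $u$, either $G\setminus(a,b)$ has a path from $w$ to $u$, or $G$ has a path from $w$ to $u$ that contains the arc $(a,b)$ and such that every vertex of its subpath from $b$ to $u$ has in-degree one in $G$. *)

theory Defs
  imports Main
begin

definition digraph :: "'a set \<Rightarrow> ('a \<times> 'a) set \<Rightarrow> bool" where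
  "digraph V E \<longleftrightarrow> finite V \<and> E \<subseteq> V \<times> V"

definition is_path :: "'a set \<Rightarrow> ('a \<times> 'a) set \<Rightarrow> 'a list \<Rightarrow> bool" where
  "is_path V E xs \<longleftrightarrow> xs \<noteq> [] \<and> distinct xs \<and> set xs \<subseteq> V \<and>
     (\<forall>i. Suc i < length xs \<longrightarrow> (xs ! i, xs ! Suc i) \<in> E)"

definition path_from_to :: "'a set \<Rightarrow> ('a \<times> 'a) set \<Rightarrow> 'a list \<Rightarrow> 'a \<Rightarrow> 'a \<Rightarrow> bool" where
  "path_from_to V E xs u v \<longleftrightarrow> is_path V E xs \<and> hd xs = u \<and> last xs = v"

definition has_path :: "'a set \<Rightarrow> ('a \<times> 'a) set \<Rightarrow> 'a \<Rightarrow> 'a \<Rightarrow> bool" where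
  "has_path V E u v \<longleftrightarrow> (\<exists>xs. path_from_to V E xs u v)"

definition strongly_connected :: "'a set \<Rightarrow> ('a \<times> 'a) set \<Rightarrow> bool" where
  "strongly_connected V E \<longleftrightarrow> (\<forall>u\<in>V. \<forall>v\<in>V. has_path V E u v)"

definition in_degree :: "('a \<times> 'a) set \<Rightarrow> 'a \<Rightarrow> nat" where
  "in_degree E y = card {x. (x, y) \<in> E}"

definition good_arc :: "'a set \<Rightarrow> ('a \<times> 'a) set \<Rightarrow> 'a \<times> 'a \<Rightarrow> 'a \<times> 'a \<Rightarrow> bool" where
  "good_arc V E ab vw \<longleftrightarrow> (case ab of (a, b) \<Rightarrow> case vw of (v, w) \<Rightarrow>
     ab \<in> E \<and> vw \<in> E \<and>
     b \<noteq> w \<and>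
     (\<forall>u\<in>V. u \<noteq> w \<longrightarrow> has_path V (E - {(a, b)}) u v) \<and>
     (\<forall>u\<in>V. has_path V (E - {(a, b)}) w u \<or>
        (\<exists>xs i. path_from_to V E xs w u \<and> Suc i < length xs \<and>
           xs ! i = a \<and> xs ! Suc i = b \<and>
           (\<forall>j. Suc i \<le> j \<and> j < length xs \<longrightarrow> in_degree E (xs ! j) = 1))))"

end

theory Submission imports Defs begin

lemma succ_nth: "successively P xs \<longleftrightarrow> (\<forall>i. Suc i < length xs \<longrightarrow> P (xs!i) (xs!Suc i))"
proof (induction P xs rule: successively.induct)
  case (3 P x y xs)
  show ?case
  proof
    assume "successively P (x # y # xs)"
    then have h: "P x y" "\<forall>i. Suc i < length (y#xs) \<longrightarrow> P ((y#xs)!i) ((y#xs)!Suc i)" using 3 by auto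
    show "\<forall>i. Suc i < length (x#y#xs) \<longrightarrow> P ((x#y#xs)!i) ((x#y#xs)!Suc i)"
    proof (intro allI impI)
      fix i assume "Suc i < length (x#y#xs)"
      then show "P ((x#y#xs)!i) ((x#y#xs)!Suc i)" using h by (cases i) auto
    qed
  next
    assume h: "\<forall>i. Suc i < length (x#y#xs) \<longrightarrow> P ((x#y#xs)!i) ((x#y#xs)!Suc i)"
    have "P x y" using h[rule_format, of 0] by simp
    moreover have "\<forall>i. Suc i < length (y#xs) \<longrightarrow> P ((y#xs)!i) ((y#xs)!Suc i)"
      using h by (metis Suc_less_eq length_Cons nth_Cons_Suc)
    ultimately show "successively P (x # y # xs)" using 3 by simp
  qed
qed auto

lemma is_path_alt: "is_path V E xs \<longleftrightarrow> xs \<noteq> [] \<and> distinct xs \<and> set xs \<subseteq> V \<and> successively (\<lambda>x y. (x,y)\<in>E) xs"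
  unfolding is_path_def succ_nth by simp

lemma succ_rtrancl: "successively (\<lambda>x y. (x,y)\<in>E) xs \<Longrightarrow> xs \<noteq> [] \<Longrightarrow> (hd xs, last xs) \<in> E\<^sup>*"
  by (induction "\<lambda>x y. (x,y)\<in>E" xs rule: successively.induct) auto

lemma rtrancl_path:
  assumes "(u,v) \<in> E\<^sup>*" "E \<subseteq> V \<times> V" "u \<in> V"
  shows "\<exists>xs. xs \<noteq> [] \<and> distinct xs \<and> set xs \<subseteq> V \<and> successively (\<lambda>x y. (x,y)\<in>E) xs \<and> hd xs = u \<and> last xs = v"
  using assms(1,3)
proof (induction rule: converse_rtrancl_induct)
  case base
  then show ?case by (intro exI[of _ "[v]"]) auto
next
  case (step x y)
  then have yV: "y \<in> V" using assms(2) by auto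
  then obtain ys where ys: "ys \<noteq> []" "distinct ys" "set ys \<subseteq> V" "successively (\<lambda>x y. (x,y)\<in>E) ys" "hd ys = y" "last ys = v"
    using step by blast
  show ?case
  proof (cases "x \<in> set ys")
    case True
    then obtain as bs where sp: "ys = as @ x # bs" by (meson split_list)
    show ?thesis
      apply (intro exI[of _ "x # bs"])
      using ys sp by (auto simp: successively_append_iff)
  next
    case False
    show ?thesis
      apply (intro exI[of _ "x # ys"])
      using ys False step by (auto simp: successively_Cons)
  qed
qed

lemma has_path_iff:
  assumes "E \<subseteq> V \<times> V" "u \<in> V"
  shows "has_path V E u v \<longleftrightarrow> (u,v) \<in> E\<^sup>*"
proof
  assume "has_path V E u v"
  then show "(u,v) \<in> E\<^sup>*" unfolding has_path_def path_from_to_def is_path_alt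
    using succ_rtrancl by blast
next
  assume "(u,v) \<in> E\<^sup>*"
  then show "has_path V E u v" unfolding has_path_def path_from_to_def is_path_alt
    using rtrancl_path[OF _ assms] by blast
qed

lemma crossing: "(a,b) \<in> E\<^sup>* \<Longrightarrow> a \<in> U \<Longrightarrow> b \<notin> U \<Longrightarrow> \<exists>x y. (x,y)\<in>E \<and> x \<in> U \<and> y \<notin> U"
  by (induction rule: rtrancl_induct) auto

lemma exit_path:
  "successively R xs \<Longrightarrow> distinct xs \<Longrightarrow> xs \<noteq> [] \<Longrightarrow> hd xs \<notin> U \<Longrightarrow> last xs \<in> U \<Longrightarrow>
   \<exists>ys ym. ys \<noteq> [] \<and> hd ys = hd xs \<and> distinct ys \<and> set ys \<subseteq> set xs \<and> set ys \<inter> U = {}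
     \<and> successively R ys \<and> R (last ys) ym \<and> ym \<in> U"
proof (induction xs)
  case Nil then show ?case by simp
next
  case (Cons a xs)
  show ?case
  proof (cases xs)
    case Nil then show ?thesis using Cons by simp
  next
    case (Cons c r)
    note xs = this
    show ?thesis
    proof (cases "c \<in> U")
      case True
      then show ?thesis using Cons.prems xs by (intro exI[of _ "[a]"] exI[of _ c]) auto
    next
      case False
      then obtain ys ym where h: "ys \<noteq> [] \<and> hd ys = hd xs \<and> distinct ys \<and> set ys \<subseteq> set xs \<and> set ys \<inter> U = {}
     \<and> successively R ys \<and> R (last ys) ym \<and> ym \<in> U"
        using Cons.IH Cons.prems xs by auto
      show ?thesis
        apply (intro exI[of _ "a # ys"] exI[of _ ym])
        using h Cons.prems xs by (auto simp: successively_Cons)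
    qed
  qed
qed

lemma chain_reach:
  "a \<in> set ys \<Longrightarrow> (hd ys, a) \<in> (set (zip ys (tl ys)))\<^sup>* \<and> (a, last ys) \<in> (set (zip ys (tl ys)))\<^sup>*"
proof (induction ys arbitrary: a)
  case Nil then show ?case by simp
next
  case (Cons b ys)
  show ?case
  proof (cases ys)
    case Nil then show ?thesis using Cons by simp
  next
    case (Cons c r)
    have Z: "set (zip (b#ys) (tl (b#ys))) = insert (b, hd ys) (set (zip ys (tl ys)))"
      using Cons by simp
    have hb: "(b, hd ys) \<in> set (zip (b#ys) (tl (b#ys)))" using Z by simp
    have mono: "(set (zip ys (tl ys)))\<^sup>* \<subseteq> (set (zip (b#ys) (tl (b#ys))))\<^sup>*"
      by (rule rtrancl_mono) (simp only: Z, blast)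
    show ?thesis
    proof (cases "a = b")
      case True
      have "(hd ys, last ys) \<in> (set (zip ys (tl ys)))\<^sup>*" using Cons.IH[of "hd ys"] Cons by simp
      then have "(hd ys, last ys) \<in> (set (zip (b#ys) (tl (b#ys))))\<^sup>*" using mono by blast
      then show ?thesis using True hb Cons by (auto intro: converse_rtrancl_into_rtrancl)
    next
      case False
      then have "a \<in> set ys" using Cons.prems by simp
      then have "(hd ys, a) \<in> (set (zip ys (tl ys)))\<^sup>* \<and> (a, last ys) \<in> (set (zip ys (tl ys)))\<^sup>*" using Cons.IH by blast
      then show ?thesis using mono hb Cons by (auto intro: converse_rtrancl_into_rtrancl)
    qed
  qed
qed


theorem lemma1:
  assumes "digraph V E" and "strongly_connected V E" and "card V \<ge> 2"
    and "(v, w) \<in> E"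
  shows "\<exists>a b. (a, b) \<in> E \<and> good_arc V E (a, b) (v, w)"
proof -
  have EV: "E \<subseteq> V \<times> V" and finV: "finite V" using assms(1) by (auto simp: digraph_def)
  have wV: "w \<in> V" and vV: "v \<in> V" using assms(4) EV by auto
  have sc: "\<forall>a\<in>V. \<forall>b\<in>V. (a,b) \<in> E\<^sup>*"
    using assms(2) has_path_iff[OF EV] by (auto simp: strongly_connected_def)
  have EVd: "E - X \<subseteq> V \<times> V" for X using EV by blast
  show ?thesis
  proof (cases "\<exists>a b. (a,b) \<in> E \<and> b \<noteq> w \<and> strongly_connected V (E - {(a,b)})")
    case True
    then obtain a b where ab: "(a,b) \<in> E" "b \<noteq> w" "strongly_connected V (E - {(a,b)})" by blast
    have "good_arc V E (a,b) (v,w)" unfolding good_arc_def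
      using ab assms(4) wV vV by (auto simp: strongly_connected_def)
    then show ?thesis using ab by blast
  next
    case False
    have nrem: False if "(a,b) \<in> E" "b \<noteq> w" "\<forall>x\<in>V. \<forall>y\<in>V. (x,y) \<in> (E - {(a,b)})\<^sup>*" for a b
      using False that has_path_iff[OF EVd] by (auto simp: strongly_connected_def)
    define SC where "SC U \<longleftrightarrow> (\<forall>a\<in>U. \<forall>b\<in>U. (a,b) \<in> (E \<inter> U \<times> U)\<^sup>*)" for U
    define Fam where "Fam U \<longleftrightarrow> w \<in> U \<and> U \<subseteq> V \<and> U \<noteq> V \<and> SC U \<and> (v \<in> U \<or> U = {w})" for U
    have "{w} \<noteq> V" using assms(3) by auto
    then have F0: "Fam {w}" using wV by (auto simp: Fam_def SC_def)
    have "\<forall>U. Fam U \<longrightarrow> card U < Suc (card V)"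
      using finV by (auto simp: Fam_def intro: card_mono le_imp_less_Suc)
    then obtain U where FU: "Fam U" and maxU: "\<And>U'. Fam U' \<Longrightarrow> card U' \<le> card U"
      using Lattices_Big.ex_has_greatest_nat[of Fam "{w}" card] F0 by blast
    have wU: "w \<in> U" and UV: "U \<subseteq> V" "U \<noteq> V" and scU: "SC U" and vU: "v \<in> U \<or> U = {w}"
      using FU by (auto simp: Fam_def)
    have EUV: "E \<inter> U \<times> U \<subseteq> U \<times> U" by blast
    obtain y0 ys ym where y0U: "y0 \<in> U" and ymU: "ym \<in> U" and ysne: "ys \<noteq> []" and dys: "distinct ys"
      and ysV: "set ys \<subseteq> V" and ysU: "set ys \<inter> U = {}" and a0: "(y0, hd ys) \<in> E"
      and aL: "(last ys, ym) \<in> E" and aI: "successively (\<lambda>x y. (x,y)\<in>E) ys" and vc: "v \<in> U \<or> v = last ys"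
    proof (cases "v \<in> U")
      case True
      obtain x where x: "x \<in> V" "x \<notin> U" using UV by blast
      then obtain y0 y1 where y01: "(y0,y1) \<in> E" "y0 \<in> U" "y1 \<notin> U"
        using crossing[of w x E U] sc wV wU by blast
      have y1V: "y1 \<in> V" using y01 EV by auto
      obtain xs where xs: "xs \<noteq> []" "distinct xs" "set xs \<subseteq> V" "successively (\<lambda>x y. (x,y)\<in>E) xs" "hd xs = y1" "last xs = w"
        using rtrancl_path[OF _ EV y1V, of w] sc y1V wV by blast
      obtain ys ym where "ys \<noteq> [] \<and> hd ys = hd xs \<and> distinct ys \<and> set ys \<subseteq> set xs \<and> set ys \<inter> U = {}
     \<and> successively (\<lambda>x y. (x,y)\<in>E) ys \<and> (last ys, ym) \<in> E \<and> ym \<in> U"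
        using exit_path[of "\<lambda>x y. (x,y)\<in>E" xs U] xs y01 wU by auto
      then show ?thesis using that[of y0 ym ys] y01 xs True by auto
    next
      case False
      then have Uw: "U = {w}" and vw: "v \<noteq> w" using vU wU by auto
      obtain xs where xs: "xs \<noteq> []" "distinct xs" "set xs \<subseteq> V" "successively (\<lambda>x y. (x,y)\<in>E) xs" "hd xs = w" "last xs = v"
        using rtrancl_path[OF _ EV wV, of v] sc vV wV by blast
      then obtain ys where xsys: "xs = w # ys" by (cases xs) auto
      have "ys \<noteq> []" using xs xsys vw by auto
      then show ?thesis using that[of w w ys] xs xsys Uw assms(4) by (auto simp: successively_Cons)
    qed
    define Z where "Z = set (zip ys (tl ys))"
    have Z: "(x,y) \<in> Z \<longleftrightarrow> (\<exists>k. Suc k < length ys \<and> x = ys!k \<and> y = ys!Suc k)" for x y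
      unfolding Z_def in_set_zip by (auto simp: nth_tl) (rule_tac x=n in exI; simp)
    have ZE: "Z \<subseteq> E" using aI Z by (auto simp: succ_nth)
    have Zys: "Z \<subseteq> set ys \<times> set ys" using Z by auto
    define EH where "EH = (E \<inter> U \<times> U) \<union> Z \<union> {(y0, hd ys), (last ys, ym)}"
    have EHE: "EH \<subseteq> E" using ZE a0 aL by (auto simp: EH_def)
    have UEH: "(a,b) \<in> EH\<^sup>*" if "a \<in> U" "b \<in> U" for a b
    proof -
      have "(a,b) \<in> (E \<inter> U \<times> U)\<^sup>*" using scU that by (auto simp: SC_def)
      moreover have "(E \<inter> U \<times> U)\<^sup>* \<subseteq> EH\<^sup>*" by (rule rtrancl_mono) (auto simp: EH_def)
      ultimately show ?thesis by blast
    qed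
    have ZEH: "Z\<^sup>* \<subseteq> EH\<^sup>*" by (rule rtrancl_mono) (auto simp: EH_def)
    have reach: "(a,w) \<in> EH\<^sup>* \<and> (w,a) \<in> EH\<^sup>*" if "a \<in> U \<union> set ys" for a
    proof (cases "a \<in> U")
      case True then show ?thesis using UEH wU by blast
    next
      case False
      then have a: "a \<in> set ys" using that by auto
      have c: "(hd ys, a) \<in> EH\<^sup>*" "(a, last ys) \<in> EH\<^sup>*" using chain_reach[OF a] ZEH by (auto simp: Z_def)
      have "(a, ym) \<in> EH\<^sup>*" using c(2) by (rule rtrancl_into_rtrancl) (auto simp: EH_def)
      then have 1: "(a, w) \<in> EH\<^sup>*" using UEH[OF ymU wU] by (rule rtrancl_trans)
      have "(w, hd ys) \<in> EH\<^sup>*" using UEH[OF wU y0U] by (rule rtrancl_into_rtrancl) (auto simp: EH_def)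
      then have 2: "(w, a) \<in> EH\<^sup>*" using c(1) by (rule rtrancl_trans)
      show ?thesis using 1 2 by blast
    qed
    have UysV: "U \<union> set ys = V"
    proof (rule ccontr)
      assume ne: "U \<union> set ys \<noteq> V"
      have "EH \<subseteq> E \<inter> (U \<union> set ys) \<times> (U \<union> set ys)" using EHE Zys y0U ymU ysne
        by (auto simp: EH_def)
      then have "EH\<^sup>* \<subseteq> (E \<inter> (U \<union> set ys) \<times> (U \<union> set ys))\<^sup>*" by (rule rtrancl_mono)
      then have "SC (U \<union> set ys)" unfolding SC_def using reach by (meson rtrancl_trans subsetD)
      then have "Fam (U \<union> set ys)" using ne wU UV ysV vc ysne by (auto simp: Fam_def)
      then have "card (U \<union> set ys) \<le> card U" by (rule maxU)
      moreover have "card (U \<union> set ys) = card U + card (set ys)"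
        using ysU finV UV by (intro card_Un_disjoint) (auto intro: finite_subset)
      moreover have "card (set ys) > 0" using ysne by (simp add: card_gt_0_iff)
      ultimately show False by simp
    qed
    have indeg: "in_degree E y = 1" if y: "y \<in> set ys" for y
    proof -
      obtain i where i: "i < length ys" "y = ys!i" using y by (auto simp: in_set_conv_nth)
      define p where "p = (if i = 0 then y0 else ys!(i-1))"
      have pE: "(p, y) \<in> E"
      proof (cases "i = 0")
        case True then show ?thesis using a0 i ysne by (simp add: p_def hd_conv_nth)
      next
        case False
        then have "Suc (i - 1) < length ys" "Suc (i - 1) = i" using i by auto
        then have "(ys!(i-1), ys!i) \<in> E" using aI unfolding succ_nth by metis
        then show ?thesis using False i by (simp add: p_def)
      qed
      have only: "x = p" if xE: "(x,y) \<in> E" for x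
      proof (rule ccontr)
        assume xp: "x \<noteq> p"
        have "(x,y) \<notin> EH"
        proof
          assume "(x,y) \<in> EH"
          moreover have "(x,y) \<notin> E \<inter> U \<times> U" using y ysU by auto
          moreover have "(x,y) \<notin> Z"
          proof
            assume "(x,y) \<in> Z"
            then obtain k where k: "Suc k < length ys" "x = ys!k" "y = ys!Suc k" using Z by blast
            then have "Suc k = i" using i dys nth_eq_iff_index_eq by metis
            then show False using k xp by (auto simp: p_def)
          qed
          moreover have "(x,y) \<noteq> (y0, hd ys)"
          proof
            assume "(x,y) = (y0, hd ys)"
            then have "ys!i = ys!0" "x = y0" using i ysne by (auto simp: hd_conv_nth)
            then have "i = 0" using i dys nth_eq_iff_index_eq ysne by blast
            then show False using xp \<open>x = y0\<close> by (simp add: p_def)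
          qed
          moreover have "(x,y) \<noteq> (last ys, ym)" using y ymU ysU by auto
          ultimately show False by (auto simp: EH_def)
        qed
        then have "EH \<subseteq> E - {(x,y)}" using EHE by blast
        then have "EH\<^sup>* \<subseteq> (E - {(x,y)})\<^sup>*" by (rule rtrancl_mono)
        then have "\<forall>a\<in>V. \<forall>b\<in>V. (a,b) \<in> (E - {(x,y)})\<^sup>*"
          using reach UysV by (meson rtrancl_trans subsetD)
        moreover have "y \<noteq> w" using y ysU wU by auto
        ultimately show False using nrem xE by blast
      qed
      have "{x. (x,y) \<in> E} = {p}" using pE only by blast
      then show ?thesis by (simp add: in_degree_def)
    qed
    define e where "e = (y0, hd ys)"
    define EH2 where "EH2 = (E \<inter> U \<times> U) \<union> Z \<union> {(last ys, ym)}"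
    have hdU: "hd ys \<notin> U" using ysne ysU hd_in_set by blast
    have lU: "last ys \<notin> U" using ysne ysU last_in_set by blast
    have EH2E: "EH2 \<subseteq> E - {e}" using ZE aL Zys y0U ysU lU hdU by (auto simp: EH2_def e_def)
    have mono2: "EH2\<^sup>* \<subseteq> (E - {e})\<^sup>*" using EH2E by (rule rtrancl_mono)
    have U2: "(a,b) \<in> EH2\<^sup>*" if "a \<in> U" "b \<in> U" for a b
    proof -
      have "(a,b) \<in> (E \<inter> U \<times> U)\<^sup>*" using scU that by (auto simp: SC_def)
      moreover have "(E \<inter> U \<times> U)\<^sup>* \<subseteq> EH2\<^sup>*" by (rule rtrancl_mono) (auto simp: EH2_def)
      ultimately show ?thesis by blast
    qed
    have ZEH2: "Z\<^sup>* \<subseteq> EH2\<^sup>*" by (rule rtrancl_mono) (auto simp: EH2_def)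
    have ii: "has_path V (E - {e}) u v" if "u \<in> V" "u \<noteq> w" for u
    proof -
      have "(u,v) \<in> EH2\<^sup>*"
      proof (cases "u \<in> U")
        case True
        then have "v \<in> U" using vU that wU by auto
        then show ?thesis using U2 True by blast
      next
        case False
        then have u: "u \<in> set ys" using that UysV by auto
        have c: "(u, last ys) \<in> EH2\<^sup>*" using chain_reach[OF u] ZEH2 by (auto simp: Z_def)
        show ?thesis
        proof (cases "v = last ys")
          case True then show ?thesis using c by simp
        next
          case False
          then have "v \<in> U" using vc by auto
          have "(u, ym) \<in> EH2\<^sup>*" using c by (rule rtrancl_into_rtrancl) (auto simp: EH2_def)
          then show ?thesis using U2[OF ymU \<open>v \<in> U\<close>] by (rule rtrancl_trans)
        qed
      qed
      then show ?thesis using mono2 has_path_iff[OF EVd that(1)] by blast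
    qed
    obtain ps where ps: "ps \<noteq> []" "distinct ps" "set ps \<subseteq> U" "successively (\<lambda>x y. (x,y)\<in>E \<inter> U \<times> U) ps"
      "hd ps = w" "last ps = y0"
      using rtrancl_path[OF _ EUV wU, of y0] scU wU y0U by (auto simp: SC_def)
    have iii: "has_path V (E - {e}) w u \<or>
        (\<exists>xs i. path_from_to V E xs w u \<and> Suc i < length xs \<and>
           xs ! i = y0 \<and> xs ! Suc i = hd ys \<and>
           (\<forall>j. Suc i \<le> j \<and> j < length xs \<longrightarrow> in_degree E (xs ! j) = 1))" if "u \<in> V" for u
    proof (cases "u \<in> U")
      case True
      then have "(w,u) \<in> EH2\<^sup>*" using U2 wU by blast
      then show ?thesis using mono2 has_path_iff[OF EVd wV] by blast
    next
      case False
      then have u: "u \<in> set ys" using that UysV by auto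
      then obtain i where i: "i < length ys" "u = ys!i" by (auto simp: in_set_conv_nth)
      define qs where "qs = take (Suc i) ys"
      define xs where "xs = ps @ qs"
      have qs: "qs \<noteq> []" "distinct qs" "set qs \<subseteq> set ys" "hd qs = hd ys" "last qs = u"
        "successively (\<lambda>x y. (x,y)\<in>E) qs" "length qs = Suc i"
        using i ysne dys aI unfolding qs_def
        apply (auto simp: set_take_subset last_conv_nth hd_conv_nth succ_nth min_def)
        apply (subgoal_tac "length ys - Suc 0 = i")
         apply simp
        apply linarith
        done
      have psE: "successively (\<lambda>x y. (x,y)\<in>E) ps"
        using ps(4) by (rule successively_mono) auto
      have "is_path V E xs" unfolding is_path_alt xs_def
        using ps qs psE ysU UV UysV a0 by (auto simp: successively_append_iff)
      then have pft: "path_from_to V E xs w u" using ps qs by (simp add: path_from_to_def xs_def)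
      have l: "Suc (length ps - 1) = length ps" using ps by simp
      have x1: "xs ! (length ps - 1) = y0" using ps by (simp add: xs_def nth_append last_conv_nth)
      have x2: "xs ! Suc (length ps - 1) = hd ys" using qs l by (simp add: xs_def nth_append hd_conv_nth)
      have x3: "\<forall>j. Suc (length ps - 1) \<le> j \<and> j < length xs \<longrightarrow> in_degree E (xs ! j) = 1"
      proof (intro allI impI)
        fix j assume j: "Suc (length ps - 1) \<le> j \<and> j < length xs"
        then have "xs ! j = qs ! (j - length ps)" using l by (simp add: xs_def nth_append)
        moreover have "j - length ps < length qs" using j l by (simp add: xs_def; linarith)
        ultimately have "xs ! j \<in> set ys" using qs(3) by (metis nth_mem subsetD)
        then show "in_degree E (xs ! j) = 1" by (rule indeg)
      qed
      have "Suc (length ps - 1) < length xs" using l qs by (simp add: xs_def)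
      then show ?thesis using pft x1 x2 x3 by blast
    qed
    have hdV: "y0 \<noteq> hd ys" using y0U hdU by auto
    have "good_arc V E e (v,w)" unfolding good_arc_def e_def
      using a0 assms(4) ii iii wU hdU by (auto simp: e_def)
    then show ?thesis using a0 by (auto simp: e_def)
  qed
qed

end
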